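(* Let $k\ge3$, $1\le s\le k$, $r\le\min\{n_1,\dots,n_s\}$, $\mathcal A\in\mathbb R^{n_1}\otimes\cdots\otimes\mathbb R^{n_k}$ nonzero, and let $\{U_{[p]}\}$ be generated by the iAPD-ALS algorithm (described in the context) with proximal parameter $\epsilon>0$ and truncation parameter $\kappa$. If the $p$-th iteration is not a truncation iteration, then $$f(U_{[p]})-f(U_{[p-1]})\ge\frac{\min\{\epsilon,2\kappa^2\}}{2}\,\|U_{[p]}-U_{[p-1]}\|_F^2 .$$
   Context: Notation. $\mathrm V(m,n)=\{U\in\mathbb R^{n\times m}:U^{\mathsf T}U=I_m\}$; $\mathrm B(m,n)$: $n\times m$ real matrices with unit columns. $\mathcal A\tau(\mathbf u_1,\dots,\mathbf u_k)=\langle\mathcal A,\mathbf u_1\otimes\cdots\otimes\mathbf u_k\rangle$; $\mathcal A\tau_i(\mathbf u_1,\dots,\mathbf u_k)\in\mathbb R^{n_i}$ is the contraction of $\mathcal A$ with all $\mathbf u_l$, $l\ne i$. For $U=(U^{(1)},\dots,U^{(k)})$ with columns $\mathbf u^{(i)}_j$, $j\le t$: $f(U)=\sum_j\mathcal A\tau(\mathbf u^{(1)}_j,\dots,\mathbf u^{(k)}_j)^2$, $\|U\|_F^2=\sum_i\|U^{(i)}\|_F^2$. $\operatorname{Polar}(X)$ is the set of $Q\in\mathrm V(m,n)$ maximizing $\langle Q,X\rangle$. iAPD-ALS algorithm. Choose $U_{[0]}\in\mathrm V(r,n_1)\times\cdots\times\mathrm V(r,n_s)\times\mathrm B(r,n_{s+1})\times\cdots\times\mathrm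 B(r,n_k)$ with $f(U_{[0]})>0$ and $\kappa\in(0,\sqrt{f(U_{[0]})/r})$. For $p=1,2,\dots$ ($t$ = current number of columns, $\mathbf u^{(i)}_{j,[q]}$ = $j$-th column of $U^{(i)}_{[q]}$), let $\mathbf x^i_{j,[p]}=(\mathbf u^{(1)}_{j,[p]},\dots,\mathbf u^{(i-1)}_{j,[p]},\mathbf u^{(i)}_{j,[p-1]},\dots,\mathbf u^{(k)}_{j,[p-1]})$, $\lambda^{i-1}_{j,[p]}=\mathcal A\tau(\mathbf x^i_{j,[p]})$, $\Lambda^{(i)}_{[p]}=\operatorname{diag}(\lambda^{i-1}_{j,[p]})_j$, $V^{(i)}_{[p]}=[\mathcal A\tau_i(\mathbf x^i_{j,[p]})]_j$. (1) For $i=1,\dots,s$ in turn pick $U^{(i)}_{[p]}\in\operatorname{Polar}(V^{(i)}_{[p]}\Lambda^{(i)}_{[p]})$, and if the smallest eigenvalue of $(U^{(i)}_{[p]})^{\mathsf T}V^{(i)}_{[p]}\Lambda^{(i)}_{[p]}$ is $<\epsilon$, instead pick $U^{(i)}_{[p]}\in\operatorname{Polar}(V^{(i)}_{[p]}\Lambda^{(i)}_{[p]}+\epsilon U^{(i)}_{[p-1]})$. (2) Truncation: with $J=\{j:|((U^{(s)}_{[p]})^{\mathsf T}V^{(s)}_{[p]})_{jj}|<\kappa\}$, if $J\neq\emptyset$ (a truncation iteration) delete columns in $J$ from $U^{(1)}_{[p]},\dots,U^{(s)}_{[p]}$ and $U^{(s+1)}_{[p-1]},\dots,U^{(k)}_{[p-1]}$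 and set $t:=t-|J|$. (3) For $i=s+1,\dots,k$ in turn, $\mathbf u^{(i)}_{j,[p]}=\operatorname{sgn}(\lambda^{i-1}_{j,[p]})\mathcal A\tau_i(\mathbf x^i_{j,[p]})/\|\mathcal A\tau_i(\mathbf x^i_{j,[p]})\|$. Set $U_{[p]}=(U^{(1)}_{[p]},\dots,U^{(k)}_{[p]})$ and iterate indefinitely. *)

theory Defs
  imports "HOL-Analysis.Analysis"
begin

text \<open>Modes are numbered 1..k, the dimension of mode i is n i.
A tensor is a real function on multi-indices; only its values on
tidx k n (multi-indices with 0 \<le> idx i < n i for i in 1..k) matter.
A vector in R^m is a function nat => real (entries 0..m-1).
A matrix with m rows is a function nat => nat => real, Q a j = entry in row a,
column j.  Columns are identified by their ORIGINAL labels j < r, and the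
set of labels of the columns still present is carried explicitly; deleting
columns (truncation) = removing labels from that set.\<close>

type_synonym vec = "nat \<Rightarrow> real"
type_synonym mat = "nat \<Rightarrow> nat \<Rightarrow> real"
type_synonym tensor = "(nat \<Rightarrow> nat) \<Rightarrow> real"

definition tidx :: "nat \<Rightarrow> (nat \<Rightarrow> nat) \<Rightarrow> (nat \<Rightarrow> nat) set" where
  "tidx k n = PiE {1..k} (\<lambda>i. {..<n i})"

definition tcontr :: "nat \<Rightarrow> (nat \<Rightarrow> nat) \<Rightarrow> tensor \<Rightarrow> (nat \<Rightarrow> vec) \<Rightarrow> real" where
  "tcontr k n A u = (\<Sum>\<iota>\<in>tidx k n. A \<iota> * (\<Prod>l\<in>{1..k}. u l (\<iota> l)))"

definition tcontr_mode :: "nat \<Rightarrow> (nat \<Rightarrow> nat) \<Rightarrow> tensor \<Rightarrow> (nat \<Rightarrow> vec) \<Rightarrow> nat \<Rightarrow> vec" where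
  "tcontr_mode k n A u i = (\<lambda>a. \<Sum>\<iota>\<in>{\<iota>\<in>tidx k n. \<iota> i = a}.
       A \<iota> * (\<Prod>l\<in>{1..k} - {i}. u l (\<iota> l)))"

definition orth_cols :: "nat \<Rightarrow> nat set \<Rightarrow> mat \<Rightarrow> bool" where
  "orth_cols m J Q \<longleftrightarrow>
     (\<forall>j\<in>J. \<forall>j'\<in>J. (\<Sum>a<m. Q a j * Q a j') = (if j = j' then 1 else 0))"

definition unit_cols :: "nat \<Rightarrow> nat set \<Rightarrow> mat \<Rightarrow> bool" where
  "unit_cols m J Q \<longleftrightarrow> (\<forall>j\<in>J. (\<Sum>a<m. (Q a j)\<^sup>2) = 1)"

definition frob_inner :: "nat \<Rightarrow> nat set \<Rightarrow> mat \<Rightarrow> mat \<Rightarrow> real" where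
  "frob_inner m J P Q = (\<Sum>a<m. \<Sum>j\<in>J. P a j * Q a j)"

definition in_polar :: "nat \<Rightarrow> nat set \<Rightarrow> mat \<Rightarrow> mat \<Rightarrow> bool" where
  "in_polar m J X Q \<longleftrightarrow> orth_cols m J Q \<and>
     (\<forall>Q'. orth_cols m J Q' \<longrightarrow> frob_inner m J Q' X \<le> frob_inner m J Q X)"

definition mtmul :: "nat \<Rightarrow> mat \<Rightarrow> mat \<Rightarrow> mat" where
  "mtmul m Q X = (\<lambda>j j'. \<Sum>a<m. Q a j * X a j')"

definition real_eigenvalue :: "nat set \<Rightarrow> mat \<Rightarrow> real \<Rightarrow> bool" where
  "real_eigenvalue J M \<mu> \<longleftrightarrow>
     (\<exists>x::vec. (\<exists>j\<in>J. x j \<noteq> 0) \<and> (\<forall>j\<in>J. (\<Sum>j'\<in>J. M j j' * x j') = \<mu> * x j))"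

text \<open>"the smallest eigenvalue of M is < e" (M is symmetric in the use below)\<close>
definition min_eig_less :: "nat set \<Rightarrow> mat \<Rightarrow> real \<Rightarrow> bool" where
  "min_eig_less J M e \<longleftrightarrow> (\<exists>\<mu>. real_eigenvalue J M \<mu> \<and> \<mu> < e)"

text \<open>An iterate sequence: U p i a j = entry (a,j) of U^(i)_[p]; the column j of
U^(i)_[p] is u^(i)_(j,[p]) = (\<lambda>a. U p i a j).\<close>

definition col :: "(nat \<Rightarrow> nat \<Rightarrow> mat) \<Rightarrow> nat \<Rightarrow> nat \<Rightarrow> nat \<Rightarrow> vec" where
  "col U q i j = (\<lambda>a. U q i a j)"

definition xvec :: "(nat \<Rightarrow> nat \<Rightarrow> mat) \<Rightarrow> nat \<Rightarrow> nat \<Rightarrow> nat \<Rightarrow> nat \<Rightarrow> vec" where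
  "xvec U p i j = (\<lambda>l. if l < i then col U p l j else col U (p - 1) l j)"

definition lam :: "nat \<Rightarrow> (nat \<Rightarrow> nat) \<Rightarrow> tensor \<Rightarrow> (nat \<Rightarrow> nat \<Rightarrow> mat) \<Rightarrow> nat \<Rightarrow> nat \<Rightarrow> nat \<Rightarrow> real" where
  "lam k n A U p i j = tcontr k n A (xvec U p i j)"

definition Vmat :: "nat \<Rightarrow> (nat \<Rightarrow> nat) \<Rightarrow> tensor \<Rightarrow> (nat \<Rightarrow> nat \<Rightarrow> mat) \<Rightarrow> nat \<Rightarrow> nat \<Rightarrow> mat" where
  "Vmat k n A U p i = (\<lambda>a j. tcontr_mode k n A (xvec U p i j) i a)"

definition VLam :: "nat \<Rightarrow> (nat \<Rightarrow> nat) \<Rightarrow> tensor \<Rightarrow> (nat \<Rightarrow> nat \<Rightarrow> mat) \<Rightarrow> nat \<Rightarrow> nat \<Rightarrow> mat" where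
  "VLam k n A U p i = (\<lambda>a j. Vmat k n A U p i a j * lam k n A U p i j)"

definition fobj :: "nat \<Rightarrow> (nat \<Rightarrow> nat) \<Rightarrow> tensor \<Rightarrow> (nat \<Rightarrow> nat \<Rightarrow> mat) \<Rightarrow> nat set \<Rightarrow> nat \<Rightarrow> real" where
  "fobj k n A U J q = (\<Sum>j\<in>J. (tcontr k n A (\<lambda>l. col U q l j))\<^sup>2)"

definition frob_dist2 :: "nat \<Rightarrow> (nat \<Rightarrow> nat) \<Rightarrow> (nat \<Rightarrow> nat \<Rightarrow> mat) \<Rightarrow> nat set \<Rightarrow> nat \<Rightarrow> nat \<Rightarrow> real" where
  "frob_dist2 k n U J p q = (\<Sum>i\<in>{1..k}. \<Sum>a<n i. \<Sum>j\<in>J. (U p i a j - U q i a j)\<^sup>2)"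

text \<open>The iAPD-ALS iteration relations. Js q = set of labels of the columns
present in U_[q].\<close>
definition iAPD_ALS :: "nat \<Rightarrow> nat \<Rightarrow> (nat \<Rightarrow> nat) \<Rightarrow> nat \<Rightarrow> tensor \<Rightarrow> real \<Rightarrow> real
    \<Rightarrow> (nat \<Rightarrow> nat \<Rightarrow> mat) \<Rightarrow> (nat \<Rightarrow> nat set) \<Rightarrow> bool" where
  "iAPD_ALS k s n r A \<epsilon> \<kappa> U Js \<longleftrightarrow>
     \<comment> \<open>initialization\<close>
     Js 0 = {..<r} \<and>
     (\<forall>i\<in>{1..s}. orth_cols (n i) {..<r} (U 0 i)) \<and>
     (\<forall>i\<in>{s+1..k}. unit_cols (n i) {..<r} (U 0 i)) \<and>
     fobj k n A U (Js 0) 0 > 0 \<and>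
     0 < \<kappa> \<and> \<kappa> < sqrt (fobj k n A U (Js 0) 0 / real r) \<and>
     (\<forall>p\<ge>1.
       \<comment> \<open>step (1): modes 1..s, columns Js (p-1)\<close>
       (\<forall>i\<in>{1..s}.
          (in_polar (n i) (Js (p - 1)) (VLam k n A U p i) (U p i) \<and>
           \<not> min_eig_less (Js (p - 1)) (mtmul (n i) (U p i) (VLam k n A U p i)) \<epsilon>)
        \<or> ((\<exists>Q. in_polar (n i) (Js (p - 1)) (VLam k n A U p i) Q \<and>
                 min_eig_less (Js (p - 1)) (mtmul (n i) Q (VLam k n A U p i)) \<epsilon>) \<and>
           in_polar (n i) (Js (p - 1))
             (\<lambda>a j. VLam k n A U p i a j + \<epsilon> * U (p - 1) i a j) (U p i))) \<and>
       \<comment> \<open>step (2): truncation\<close>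
       Js p = {j \<in> Js (p - 1). \<bar>mtmul (n s) (U p s) (Vmat k n A U p s) j j\<bar> \<ge> \<kappa>} \<and>
       \<comment> \<open>step (3): modes s+1..k, columns Js p\<close>
       (\<forall>i\<in>{s+1..k}. \<forall>j\<in>Js p. \<forall>a<n i.
          U p i a j = sgn (lam k n A U p i j) * Vmat k n A U p i a j
                      / sqrt (\<Sum>b<n i. (Vmat k n A U p i b j)\<^sup>2)))"

end

theory Submission imports Defs begin

lemma rayleigh_min:
  fixes S :: "nat \<Rightarrow> nat \<Rightarrow> real" and J :: "nat set"
  assumes fin: "finite J" and ne: "J \<noteq> {}"
  shows "\<exists>x0. (\<Sum>j\<in>J. (x0 j)\<^sup>2) = 1 \<and>
    (\<forall>x. (\<Sum>j\<in>J. (x j)\<^sup>2) = 1 \<longrightarrow>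
       (\<Sum>j\<in>J. \<Sum>j'\<in>J. x0 j * S j j' * x0 j') \<le> (\<Sum>j\<in>J. \<Sum>j'\<in>J. x j * S j j' * x j'))"
proof -
  define X where "X = product_topology (\<lambda>_. euclideanreal) J"
  define K where "K = {x \<in> topspace X. (\<lambda>x. \<Sum>j\<in>J. (x j)\<^sup>2) x \<in> {1}}"
  define R where "R = (\<lambda>x::nat\<Rightarrow>real. \<Sum>j\<in>J. \<Sum>j'\<in>J. x j * S j j' * x j')"
  have topX: "topspace X = PiE J (\<lambda>_. UNIV)" unfolding X_def by simp
  have cb: "compactin X (PiE J (\<lambda>_. {-1..1}))"
    unfolding X_def by (simp add: compactin_PiE)
  have cg: "continuous_map X euclideanreal (\<lambda>x. \<Sum>j\<in>J. (x j)\<^sup>2)"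
    unfolding X_def power2_eq_square
    by (intro continuous_map_sum continuous_map_real_mult fin)
       (auto intro: continuous_map_product_projection)
  have clK: "closedin X K"
    unfolding K_def by (rule closedin_continuous_map_preimage[OF cg]) simp
  have KB: "K \<subseteq> PiE J (\<lambda>_. {-1..1})"
  proof
    fix x assume "x \<in> K"
    then have x: "x \<in> PiE J (\<lambda>_. UNIV)" "(\<Sum>j\<in>J. (x j)\<^sup>2) = 1" by (auto simp: K_def topX)
    have "\<bar>x j\<bar> \<le> 1" if "j \<in> J" for j
    proof -
      have "(x j)\<^sup>2 \<le> (\<Sum>j\<in>J. (x j)\<^sup>2)"
        using that fin by (intro member_le_sum) auto
      then have "(x j)\<^sup>2 \<le> 1\<^sup>2" using x by simp
      then show ?thesis using abs_le_square_iff[of "x j" 1] by simp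
    qed
    then show "x \<in> PiE J (\<lambda>_. {-1..1})" using x by (auto simp: PiE_def Pi_def abs_le_iff)
  qed
  have cK: "compactin X K" by (rule closed_compactin[OF cb KB clK])
  have cR: "continuous_map X euclideanreal R"
    unfolding X_def R_def
    by (intro continuous_map_sum continuous_map_real_mult fin continuous_map_const[THEN iffD2])
       (auto intro: continuous_map_product_projection)
  have "compactin euclideanreal (R ` K)" by (rule image_compactin[OF cK cR])
  then have cRK: "compact (R ` K)" by simp
  obtain j0 where j0: "j0 \<in> J" using ne by auto
  define e where "e = (\<lambda>j::nat. if j = j0 then 1 else (0::real))"
  have "(\<Sum>j\<in>J. (restrict e J j)\<^sup>2) = (\<Sum>j\<in>J. (if j = j0 then 1 else 0))"
    by (intro sum.cong) (auto simp: e_def)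
  also have "\<dots> = 1" using j0 fin by simp
  finally have "restrict e J \<in> K" by (simp add: K_def topX)
  then have "R ` K \<noteq> {}" by auto
  from compact_attains_inf[OF cRK this] obtain x0 where x0: "x0 \<in> K" "\<forall>y\<in>K. R x0 \<le> R y" by auto
  show ?thesis
  proof (intro exI conjI allI impI)
    show "(\<Sum>j\<in>J. (x0 j)\<^sup>2) = 1" using x0 by (simp add: K_def)
    fix x :: "nat \<Rightarrow> real" assume h: "(\<Sum>j\<in>J. (x j)\<^sup>2) = 1"
    have "restrict x J \<in> K" using h by (simp add: K_def topX)
    then have "R x0 \<le> R (restrict x J)" using x0 by auto
    also have "R (restrict x J) = R x" unfolding R_def by (intro sum.cong refl) auto
    finally show "(\<Sum>j\<in>J. \<Sum>j'\<in>J. x0 j * S j j' * x0 j') \<le> (\<Sum>j\<in>J. \<Sum>j'\<in>J. x j * S j j' * x j')" by (simp add: R_def)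
  qed
qed

lemma lin_quad_zero:
  fixes a b :: real
  assumes "\<forall>t. 0 \<le> a * t + b * t\<^sup>2"
  shows "a = 0"
proof (rule ccontr)
  assume a: "a \<noteq> 0"
  obtain B where B: "B = \<bar>b\<bar> + 1" by simp
  have pos: "B > 0" "b < B" using B by auto
  define t where "t = - a / (2 * B)"
  have "0 \<le> a * t + b * t\<^sup>2" using assms by simp
  also have "a * t + b * t\<^sup>2 = a\<^sup>2 * (b - 2 * B) / (4 * B\<^sup>2)"
    unfolding t_def using pos by (simp add: field_simps power2_eq_square)
  finally have "0 \<le> a\<^sup>2 * (b - 2 * B)"
    using pos by (simp add: zero_le_divide_iff)
  moreover have "a\<^sup>2 > 0" using a by simp
  moreover have "b - 2 * B < 0" using pos by simp
  ultimately show False by (simp add: mult_pos_neg zero_le_mult_iff)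
qed

definition qf :: "nat set \<Rightarrow> (nat \<Rightarrow> nat \<Rightarrow> real) \<Rightarrow> (nat \<Rightarrow> real) \<Rightarrow> (nat \<Rightarrow> real) \<Rightarrow> real" where
  "qf J S u v = (\<Sum>j\<in>J. \<Sum>j'\<in>J. u j * S j j' * v j')"

lemma qf_expand:
  "qf J S (\<lambda>j. u j + t * w j) (\<lambda>j. u j + t * w j)
     = qf J S u u + t * (qf J S u w + qf J S w u) + t\<^sup>2 * qf J S w w"
  unfolding qf_def by (simp add: algebra_simps sum.distrib sum_distrib_left power2_eq_square)

lemma qf_sym:
  assumes "\<forall>j\<in>J. \<forall>j'\<in>J. S j j' = S j' j"
  shows "qf J S u w = qf J S w u"
  unfolding qf_def
  apply (subst sum.swap)
  apply (intro sum.cong refl)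
  using assms by (simp add: mult.commute mult.left_commute)

lemma sym_psd:
  fixes S :: "nat \<Rightarrow> nat \<Rightarrow> real"
  assumes fin: "finite J" and sym: "\<forall>j\<in>J. \<forall>j'\<in>J. S j j' = S j' j"
    and noeig: "\<not> min_eig_less J S \<epsilon>"
  shows "\<epsilon> * (\<Sum>j\<in>J. (y j)\<^sup>2) \<le> qf J S y y"
proof (cases "J = {}")
  case True then show ?thesis by (simp add: qf_def)
next
  case False
  from rayleigh_min[OF fin False, of S] obtain x0 where
    x0: "(\<Sum>j\<in>J. (x0 j)\<^sup>2) = 1"
    "\<And>x. (\<Sum>j\<in>J. (x j)\<^sup>2) = 1 \<Longrightarrow> qf J S x0 x0 \<le> qf J S x x"
    unfolding qf_def by blast
  define \<mu> where "\<mu> = qf J S x0 x0"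
  have gen: "\<mu> * (\<Sum>j\<in>J. (z j)\<^sup>2) \<le> qf J S z z" for z
  proof (cases "(\<Sum>j\<in>J. (z j)\<^sup>2) = 0")
    case True
    then have "\<forall>j\<in>J. z j = 0" using fin by (simp add: sum_nonneg_eq_0_iff)
    then show ?thesis using True by (simp add: qf_def)
  next
    case False
    define c where "c = sqrt (\<Sum>j\<in>J. (z j)\<^sup>2)"
    have nn: "(\<Sum>j\<in>J. (z j)\<^sup>2) > 0" using False by (simp add: sum_nonneg order_le_neq_trans)
    then have c: "c > 0" "c\<^sup>2 = (\<Sum>j\<in>J. (z j)\<^sup>2)" by (auto simp: c_def)
    have "(\<Sum>j\<in>J. (z j / c)\<^sup>2) = (\<Sum>j\<in>J. (z j)\<^sup>2) / c\<^sup>2"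
      by (simp add: power_divide sum_divide_distrib)
    also have "\<dots> = 1" using c nn by simp
    finally have "\<mu> \<le> qf J S (\<lambda>j. z j / c) (\<lambda>j. z j / c)" using x0(2)[of "\<lambda>j. z j / c"] \<mu>_def by blast
    also have "qf J S (\<lambda>j. z j / c) (\<lambda>j. z j / c) = qf J S z z / c\<^sup>2"
      unfolding qf_def by (simp add: sum_divide_distrib power2_eq_square)
    finally show ?thesis using c nn by (simp add: pos_le_divide_eq)
  qed
  have eig: "qf J S w x0 = \<mu> * (\<Sum>j\<in>J. x0 j * w j)" for w
  proof -
    have "\<forall>t. 0 \<le> (2 * qf J S w x0 - 2 * \<mu> * (\<Sum>j\<in>J. x0 j * w j)) * t
                 + (qf J S w w - \<mu> * (\<Sum>j\<in>J. (w j)\<^sup>2)) * t\<^sup>2"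
    proof
      fix t
      have "\<mu> * (\<Sum>j\<in>J. (x0 j + t * w j)\<^sup>2) \<le> qf J S (\<lambda>j. x0 j + t * w j) (\<lambda>j. x0 j + t * w j)"
        by (rule gen)
      also have "\<dots> = \<mu> + t * (2 * qf J S w x0) + t\<^sup>2 * qf J S w w"
        by (simp add: qf_expand qf_sym[OF sym, of x0 w] \<mu>_def)
      also have "(\<Sum>j\<in>J. (x0 j + t * w j)\<^sup>2) = 1 + 2 * t * (\<Sum>j\<in>J. x0 j * w j) + t\<^sup>2 * (\<Sum>j\<in>J. (w j)\<^sup>2)"
        using x0(1) by (simp add: power2_sum sum.distrib sum_distrib_left algebra_simps power_mult_distrib)
      finally show "0 \<le> (2 * qf J S w x0 - 2 * \<mu> * (\<Sum>j\<in>J. x0 j * w j)) * t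
                 + (qf J S w w - \<mu> * (\<Sum>j\<in>J. (w j)\<^sup>2)) * t\<^sup>2"
        by (simp add: algebra_simps)
    qed
    from lin_quad_zero[OF this] show ?thesis by simp
  qed
  define w where "w = (\<lambda>j. (\<Sum>j'\<in>J. S j j' * x0 j') - \<mu> * x0 j)"
  have "qf J S w x0 - \<mu> * (\<Sum>j\<in>J. x0 j * w j) = (\<Sum>j\<in>J. (w j)\<^sup>2)"
    unfolding qf_def w_def
    by (simp add: power2_eq_square algebra_simps sum_subtractf sum_distrib_left sum_distrib_right sum.distrib)
  then have "(\<Sum>j\<in>J. (w j)\<^sup>2) = 0" using eig[of w] by simp
  then have w0: "\<forall>j\<in>J. w j = 0" using fin by (simp add: sum_nonneg_eq_0_iff)
  have "\<exists>j\<in>J. x0 j \<noteq> 0"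
  proof (rule ccontr)
    assume "\<not> ?thesis"
    then have "(\<Sum>j\<in>J. (x0 j)\<^sup>2) = 0" by simp
    then show False using x0(1) by simp
  qed
  then have "real_eigenvalue J S \<mu>"
    unfolding real_eigenvalue_def using w0 by (auto simp: w_def)
  then have "\<epsilon> \<le> \<mu>" using noeig unfolding min_eig_less_def by force
  then have "\<epsilon> * (\<Sum>j\<in>J. (y j)\<^sup>2) \<le> \<mu> * (\<Sum>j\<in>J. (y j)\<^sup>2)"
    by (intro mult_right_mono sum_nonneg) auto
  also have "\<dots> \<le> qf J S y y" by (rule gen)
  finally show ?thesis .
qed

lemma circle_zero:
  fixes \<alpha> \<beta> :: real
  assumes "\<And>c s. c\<^sup>2 + s\<^sup>2 = 1 \<Longrightarrow> (c - 1) * \<alpha> + s * \<beta> \<le> 0"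
  shows "\<beta> = 0"
proof -
  have "\<forall>t. 0 \<le> (- 2 * \<beta>) * t + (2 * \<alpha>) * t\<^sup>2"
  proof
    fix t :: real
    define c where "c = (1 - t\<^sup>2) / (1 + t\<^sup>2)"
    define s where "s = 2 * t / (1 + t\<^sup>2)"
    have d: "1 + t\<^sup>2 > 0" by (simp add: add_pos_nonneg)
    have e: "(1 - t\<^sup>2)\<^sup>2 + (2 * t)\<^sup>2 = (1 + t\<^sup>2)\<^sup>2" by (simp add: power2_eq_square algebra_simps)
    have "c\<^sup>2 + s\<^sup>2 = ((1 - t\<^sup>2)\<^sup>2 + (2 * t)\<^sup>2) / (1 + t\<^sup>2)\<^sup>2"
      unfolding c_def s_def by (simp add: power_divide add_divide_distrib)
    then have "c\<^sup>2 + s\<^sup>2 = 1" using e d by simp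
    then have "(c - 1) * \<alpha> + s * \<beta> \<le> 0" by (rule assms)
    also have "(c - 1) * \<alpha> + s * \<beta> = (- 2 * t\<^sup>2 * \<alpha> + 2 * t * \<beta>) / (1 + t\<^sup>2)"
    proof -
      have "c - 1 = - 2 * t\<^sup>2 / (1 + t\<^sup>2)" unfolding c_def using d by (simp add: field_simps)
      then show ?thesis unfolding s_def by (simp add: add_divide_distrib diff_divide_distrib)
    qed
    finally have "- 2 * t\<^sup>2 * \<alpha> + 2 * t * \<beta> \<le> 0" using d by (simp add: divide_le_0_iff)
    then show "0 \<le> (- 2 * \<beta>) * t + (2 * \<alpha>) * t\<^sup>2" by (simp add: algebra_simps)
  qed
  from lin_quad_zero[OF this] show ?thesis by simp
qed

definition ipm :: "nat \<Rightarrow> (nat \<Rightarrow> real) \<Rightarrow> (nat \<Rightarrow> real) \<Rightarrow> real" where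
  "ipm m u v = (\<Sum>a<m. u a * v a)"

lemma ipm_lin_l: "ipm m (\<lambda>a. c * u a + s * v a) w = c * ipm m u w + s * ipm m v w"
  unfolding ipm_def by (simp add: algebra_simps sum.distrib sum_distrib_left)
lemma ipm_lin_r: "ipm m w (\<lambda>a. c * u a + s * v a) = c * ipm m w u + s * ipm m w v"
  unfolding ipm_def by (simp add: algebra_simps sum.distrib sum_distrib_left)
lemma ipm_comm: "ipm m u v = ipm m v u"
  unfolding ipm_def by (simp add: mult.commute)

lemma orth_cols_ipm:
  "orth_cols m J Q \<longleftrightarrow> (\<forall>l\<in>J. \<forall>l'\<in>J. ipm m (\<lambda>a. Q a l) (\<lambda>a. Q a l') = (if l = l' then 1 else 0))"
  unfolding orth_cols_def ipm_def by simp

lemma frob_inner_diff: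
  assumes "finite J"
  shows "frob_inner m J Q' X - frob_inner m J Q X = (\<Sum>l\<in>J. ipm m (\<lambda>a. Q' a l - Q a l) (\<lambda>a. X a l))"
  unfolding frob_inner_def ipm_def
  by (subst sum.swap) (simp add: sum_subtractf[symmetric] algebra_simps)

lemma polar_one_col:
  assumes fin: "finite J" and pol: "in_polar m J X Q" and j: "j \<in> J"
    and orth: "orth_cols m J (\<lambda>a l. if l = j then u a else Q a l)"
  shows "ipm m (\<lambda>a. u a - Q a j) (\<lambda>a. X a j) \<le> 0"
proof -
  let ?Q' = "\<lambda>a l. if l = j then u a else Q a l"
  have "frob_inner m J ?Q' X \<le> frob_inner m J Q X" using pol orth unfolding in_polar_def by blast
  moreover have "frob_inner m J ?Q' X - frob_inner m J Q X = ipm m (\<lambda>a. u a - Q a j) (\<lambda>a. X a j)"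
  proof -
    have "frob_inner m J ?Q' X - frob_inner m J Q X = (\<Sum>l\<in>J. ipm m (\<lambda>a. ?Q' a l - Q a l) (\<lambda>a. X a l))"
      by (rule frob_inner_diff[OF fin])
    also have "\<dots> = (\<Sum>l\<in>J. if l = j then ipm m (\<lambda>a. u a - Q a j) (\<lambda>a. X a j) else 0)"
      by (intro sum.cong refl) (auto simp: ipm_def)
    also have "\<dots> = ipm m (\<lambda>a. u a - Q a j) (\<lambda>a. X a j)" using fin j by simp
    finally show ?thesis .
  qed
  ultimately show ?thesis by simp
qed

lemma polar_two_col:
  assumes fin: "finite J" and pol: "in_polar m J X Q" and j: "j \<in> J" and j': "j' \<in> J" "j' \<noteq> j"
    and orth: "orth_cols m J (\<lambda>a l. if l = j then u a else if l = j' then u' a else Q a l)"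
  shows "ipm m (\<lambda>a. u a - Q a j) (\<lambda>a. X a j) + ipm m (\<lambda>a. u' a - Q a j') (\<lambda>a. X a j') \<le> 0"
proof -
  let ?Q' = "\<lambda>a l. if l = j then u a else if l = j' then u' a else Q a l"
  have "frob_inner m J ?Q' X \<le> frob_inner m J Q X" using pol orth unfolding in_polar_def by blast
  moreover have "frob_inner m J ?Q' X - frob_inner m J Q X = ipm m (\<lambda>a. u a - Q a j) (\<lambda>a. X a j) + ipm m (\<lambda>a. u' a - Q a j') (\<lambda>a. X a j')"
  proof -
    have "frob_inner m J ?Q' X - frob_inner m J Q X = (\<Sum>l\<in>J. ipm m (\<lambda>a. ?Q' a l - Q a l) (\<lambda>a. X a l))"
      by (rule frob_inner_diff[OF fin])
    also have "\<dots> = (\<Sum>l\<in>J. (if l = j then ipm m (\<lambda>a. u a - Q a j) (\<lambda>a. X a j) else 0)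
                            + (if l = j' then ipm m (\<lambda>a. u' a - Q a j') (\<lambda>a. X a j') else 0))"
      using j' by (intro sum.cong refl) (auto simp: ipm_def)
    also have "\<dots> = ipm m (\<lambda>a. u a - Q a j) (\<lambda>a. X a j) + ipm m (\<lambda>a. u' a - Q a j') (\<lambda>a. X a j')"
      using fin j j' by (simp add: sum.distrib)
    finally show ?thesis .
  qed
  ultimately show ?thesis by simp
qed

lemma ipm_sum_l: "ipm m (\<lambda>a. \<Sum>i\<in>I. f i * g i a) w = (\<Sum>i\<in>I. f i * ipm m (g i) w)"
  unfolding ipm_def sum_distrib_right sum_distrib_left by (subst sum.swap) (simp add: mult.assoc)

lemma ipm_diff_l: "ipm m (\<lambda>a. u a - v a) w = ipm m u w - ipm m v w"
  unfolding ipm_def by (simp add: algebra_simps sum_subtractf)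

lemma mtmul_ipm: "mtmul m Q X i j = ipm m (\<lambda>a. Q a i) (\<lambda>a. X a j)"
  unfolding mtmul_def ipm_def by simp

lemma polar_span:
  assumes fin: "finite J" and pol: "in_polar m J X Q" and j: "j \<in> J" and a: "a < m"
  shows "X a j = (\<Sum>i\<in>J. mtmul m Q X i j * Q a i)"
proof -
  let ?S = "mtmul m Q X"
  have orthQ: "\<And>l l'. l \<in> J \<Longrightarrow> l' \<in> J \<Longrightarrow> ipm m (\<lambda>a. Q a l) (\<lambda>a. Q a l') = (if l = l' then 1 else 0)"
    using pol unfolding in_polar_def orth_cols_ipm by blast
  define z where "z = (\<lambda>a. X a j - (\<Sum>i\<in>J. ?S i j * Q a i))"
  have zq: "ipm m z (\<lambda>a. Q a l) = 0" if l: "l \<in> J" for l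
  proof -
    have "ipm m z (\<lambda>a. Q a l) = ?S l j - (\<Sum>i\<in>J. ?S i j * ipm m (\<lambda>a. Q a i) (\<lambda>a. Q a l))"
      unfolding z_def ipm_diff_l ipm_sum_l mtmul_ipm ipm_comm[of m "\<lambda>a. X a j"] by simp
    also have "(\<Sum>i\<in>J. ?S i j * ipm m (\<lambda>a. Q a i) (\<lambda>a. Q a l)) = (\<Sum>i\<in>J. if i = l then ?S l j else 0)"
      using l by (intro sum.cong refl) (simp add: orthQ)
    also have "\<dots> = ?S l j" using fin l by simp
    finally show ?thesis by simp
  qed
  have zx: "ipm m z (\<lambda>a. X a j) = ipm m z z"
  proof -
    have "ipm m z z = ipm m z (\<lambda>a. X a j) - (\<Sum>i\<in>J. ?S i j * ipm m z (\<lambda>a. Q a i))"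
      by (subst (2) z_def) (simp only: ipm_comm[of m z] ipm_diff_l ipm_sum_l)
    also have "(\<Sum>i\<in>J. ?S i j * ipm m z (\<lambda>a. Q a i)) = 0" by (simp add: zq)
    finally show ?thesis by simp
  qed
  define N where "N = ipm m z z"
  have N0: "N \<ge> 0" unfolding N_def ipm_def by (simp add: sum_nonneg)
  have "N = 0"
  proof (rule ccontr)
    assume "N \<noteq> 0"
    then have Np: "N > 0" using N0 by simp
    define nz where "nz = sqrt N"
    have nz: "nz > 0" "nz * nz = N" using Np by (auto simp: nz_def)
    have "nz = 0"
    proof (rule circle_zero[of "?S j j"])
      fix c s :: real assume cs: "c\<^sup>2 + s\<^sup>2 = 1"
      define u where "u = (\<lambda>a. c * Q a j + (s / nz) * z a)"
      have uu: "ipm m u u = 1"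
      proof -
        have "ipm m u u = c * (c * 1 + (s / nz) * 0) + (s / nz) * (c * 0 + (s / nz) * N)"
          unfolding u_def ipm_lin_l ipm_lin_r
          using orthQ[OF j j] zq[OF j] ipm_comm[of m "\<lambda>a. Q a j" z] by (simp only: N_def) simp
        also have "\<dots> = c\<^sup>2 + s\<^sup>2 * (N / (nz * nz))" by (simp add: power2_eq_square)
        also have "\<dots> = 1" using nz cs by (simp add: nz(2)[symmetric])
        finally show ?thesis .
      qed
      have uq: "ipm m u (\<lambda>a. Q a l) = 0" if "l \<in> J" "l \<noteq> j" for l
        unfolding u_def ipm_lin_l using orthQ[OF j that(1)] zq[OF that(1)] that by simp
      have orth: "orth_cols m J (\<lambda>a l. if l = j then u a else Q a l)"
        unfolding orth_cols_ipm
      proof (intro ballI)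
        fix l l' assume l: "l \<in> J" and l': "l' \<in> J"
        show "ipm m (\<lambda>a. if l = j then u a else Q a l) (\<lambda>a. if l' = j then u a else Q a l') = (if l = l' then 1 else 0)"
        proof (cases "l = j")
          case True
          show ?thesis
          proof (cases "l' = j")
            case True then show ?thesis using \<open>l = j\<close> uu by simp
          next
            case False then show ?thesis using \<open>l = j\<close> uq[OF l' False] by simp
          qed
        next
          case False
          show ?thesis
          proof (cases "l' = j")
            case True then show ?thesis using False uq[OF l False] ipm_comm[of m u "\<lambda>a. Q a l"] by simp
          next
            case False then show ?thesis using \<open>l \<noteq> j\<close> orthQ[OF l l'] by simp
          qed
        qed
      qed
      have "ipm m (\<lambda>a. u a - Q a j) (\<lambda>a. X a j) \<le> 0"
        by (rule polar_one_col[OF fin pol j orth])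
      also have "ipm m (\<lambda>a. u a - Q a j) (\<lambda>a. X a j) = (c - 1) * ?S j j + (s / nz) * N"
        unfolding ipm_diff_l u_def ipm_lin_l mtmul_ipm zx N_def by (simp add: algebra_simps)
      also have "(s / nz) * N = s * nz" using nz by (simp add: field_simps)
      finally show "(c - 1) * ?S j j + s * nz \<le> 0" .
    qed
    then show False using nz by simp
  qed
  then have "\<forall>a<m. z a = 0" unfolding N_def ipm_def by (simp add: sum_nonneg_eq_0_iff)
  then show ?thesis using a unfolding z_def by simp
qed

lemma lam_if: "(\<lambda>a. if P then f a else g a) = (if P then f else g)"
  by auto

lemma polar_sym:
  assumes fin: "finite J" and pol: "in_polar m J X Q" and j: "j \<in> J" and j': "j' \<in> J"
  shows "mtmul m Q X j j' = mtmul m Q X j' j"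
proof (cases "j = j'")
  case True then show ?thesis by simp
next
  case ne: False
  let ?S = "mtmul m Q X"
  have orthQ: "\<And>l l'. l \<in> J \<Longrightarrow> l' \<in> J \<Longrightarrow> ipm m (\<lambda>a. Q a l) (\<lambda>a. Q a l') = (if l = l' then 1 else 0)"
    using pol unfolding in_polar_def orth_cols_ipm by blast
  define qj where "qj = (\<lambda>a. Q a j)"
  define qj' where "qj' = (\<lambda>a. Q a j')"
  have o11: "ipm m qj qj = 1" and o22: "ipm m qj' qj' = 1" and o12: "ipm m qj qj' = 0" and o21: "ipm m qj' qj = 0"
    using orthQ[OF j j] orthQ[OF j' j'] orthQ[OF j j'] orthQ[OF j' j] ne by (auto simp: qj_def qj'_def)
  have "?S j' j - ?S j j' = 0"
  proof (rule circle_zero[of "?S j j + ?S j' j'"])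
    fix c s :: real assume cs: "c\<^sup>2 + s\<^sup>2 = 1"
    define u where "u = (\<lambda>a. c * qj a + s * qj' a)"
    define u' where "u' = (\<lambda>a. (- s) * qj a + c * qj' a)"
    have uu: "ipm m u u = 1" unfolding u_def ipm_lin_l ipm_lin_r o11 o12 o21 o22
      using cs by (simp add: power2_eq_square)
    have u'u': "ipm m u' u' = 1" unfolding u'_def ipm_lin_l ipm_lin_r o11 o12 o21 o22
      using cs by (simp add: power2_eq_square)
    have uu': "ipm m u u' = 0" unfolding u_def u'_def ipm_lin_l ipm_lin_r o11 o12 o21 o22
      by (simp add: algebra_simps)
    have u'u: "ipm m u' u = 0" using uu' ipm_comm[of m u' u] by simp
    have uq: "ipm m u (\<lambda>a. Q a l) = 0" "ipm m u' (\<lambda>a. Q a l) = 0"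
      "ipm m (\<lambda>a. Q a l) u = 0" "ipm m (\<lambda>a. Q a l) u' = 0"
      if "l \<in> J" "l \<noteq> j" "l \<noteq> j'" for l
    proof -
      have a: "ipm m qj (\<lambda>a. Q a l) = 0" "ipm m qj' (\<lambda>a. Q a l) = 0"
        using orthQ[OF j that(1)] orthQ[OF j' that(1)] that by (auto simp: qj_def qj'_def)
      show "ipm m u (\<lambda>a. Q a l) = 0" "ipm m u' (\<lambda>a. Q a l) = 0"
        unfolding u_def u'_def ipm_lin_l a by simp_all
      then show "ipm m (\<lambda>a. Q a l) u = 0" "ipm m (\<lambda>a. Q a l) u' = 0"
        using ipm_comm[of m u "\<lambda>a. Q a l"] ipm_comm[of m u' "\<lambda>a. Q a l"] by simp_all
    qed
    have orth: "orth_cols m J (\<lambda>a l. if l = j then u a else if l = j' then u' a else Q a l)"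
      unfolding orth_cols_ipm
    proof (intro ballI)
      fix l l' assume l: "l \<in> J" and l': "l' \<in> J"
      have cases: "l = j \<or> l = j' \<or> (l \<noteq> j \<and> l \<noteq> j')" "l' = j \<or> l' = j' \<or> (l' \<noteq> j \<and> l' \<noteq> j')" by auto
      show "ipm m (\<lambda>a. if l = j then u a else if l = j' then u' a else Q a l)
                  (\<lambda>a. if l' = j then u a else if l' = j' then u' a else Q a l') = (if l = l' then 1 else 0)"
        using cases(1)
      proof (elim disjE conjE)
        assume "l = j"
        then show ?thesis using cases(2) ne uu uu' uq(1,2)[OF l'] by (elim disjE conjE) auto
      next
        assume "l = j'"
        then show ?thesis using cases(2) ne u'u' u'u uq(1,2)[OF l'] by (elim disjE conjE) auto
      next
        assume h: "l \<noteq> j" "l \<noteq> j'"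
        then show ?thesis using cases(2) ne uq(3,4)[OF l h] orthQ[OF l l'] by (elim disjE conjE) auto
      qed
    qed
    have "ipm m (\<lambda>a. u a - Q a j) (\<lambda>a. X a j) + ipm m (\<lambda>a. u' a - Q a j') (\<lambda>a. X a j') \<le> 0"
      by (rule polar_two_col[OF fin pol j j' _ orth]) (use ne in auto)
    also have "ipm m (\<lambda>a. u a - Q a j) (\<lambda>a. X a j) + ipm m (\<lambda>a. u' a - Q a j') (\<lambda>a. X a j')
       = (c - 1) * (?S j j + ?S j' j') + s * (?S j' j - ?S j j')"
      unfolding ipm_diff_l u_def u'_def ipm_lin_l mtmul_ipm qj_def qj'_def
      by (simp add: algebra_simps)
    finally show "(c - 1) * (?S j j + ?S j' j') + s * (?S j' j - ?S j j') \<le> 0" .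
  qed
  then show ?thesis by simp
qed

lemma polar_case1:
  assumes fin: "finite J" and pol: "in_polar m J X Q" and noeig: "\<not> min_eig_less J (mtmul m Q X) \<epsilon>"
    and P: "orth_cols m J P"
  shows "\<epsilon> / 2 * (\<Sum>a<m. \<Sum>j\<in>J. (Q a j - P a j)\<^sup>2) \<le> frob_inner m J (\<lambda>a j. Q a j - P a j) X"
proof -
  define S where "S = mtmul m Q X"
  define W where "W = (\<lambda>i j'. \<Sum>a<m. Q a i * P a j')"
  define d where "d = (\<lambda>a j. Q a j - P a j)"
  have sym: "\<forall>j\<in>J. \<forall>j'\<in>J. S j j' = S j' j" unfolding S_def using polar_sym[OF fin pol] by blast
  have span: "\<And>a j. a < m \<Longrightarrow> j \<in> J \<Longrightarrow> X a j = (\<Sum>i\<in>J. S i j * Q a i)"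
    unfolding S_def using polar_span[OF fin pol] by blast
  have Sdef: "\<And>j j'. S j j' = (\<Sum>a<m. Q a j * X a j')" unfolding S_def mtmul_def by simp
  have PP: "\<And>j j'. j \<in> J \<Longrightarrow> j' \<in> J \<Longrightarrow> (\<Sum>a<m. P a j * P a j') = (if j = j' then 1 else 0)"
    using P unfolding orth_cols_def by blast
  have psd: "\<epsilon> * (\<Sum>j\<in>J. (d a j)\<^sup>2) \<le> qf J S (d a) (d a)" for a
    by (rule sym_psd[OF fin sym noeig[folded S_def]])
  have "\<epsilon> * (\<Sum>a<m. \<Sum>j\<in>J. (d a j)\<^sup>2) \<le> (\<Sum>a<m. qf J S (d a) (d a))"
    unfolding sum_distrib_left using psd by (intro sum_mono) (simp add: sum_distrib_left)
  moreover have key: "(\<Sum>a<m. qf J S (d a) (d a)) = 2 * frob_inner m J d X"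
  proof -
    define F where "F = frob_inner m J d X"
    define T where "T = (\<Sum>i\<in>J. \<Sum>j'\<in>J. S i j' * W i j')"
    have F1: "F = (\<Sum>j\<in>J. S j j) - T"
    proof -
      have "F = (\<Sum>j'\<in>J. \<Sum>a<m. Q a j' * X a j') - (\<Sum>j'\<in>J. \<Sum>a<m. P a j' * X a j')"
        unfolding F_def frob_inner_def d_def
        by (subst sum.swap) (simp add: algebra_simps sum_subtractf)
      also have "(\<Sum>j'\<in>J. \<Sum>a<m. Q a j' * X a j') = (\<Sum>j\<in>J. S j j)" by (simp add: Sdef)
      also have "(\<Sum>j'\<in>J. \<Sum>a<m. P a j' * X a j') = (\<Sum>j'\<in>J. \<Sum>a<m. P a j' * (\<Sum>i\<in>J. S i j' * Q a i))"
        by (intro sum.cong refl) (simp add: span)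
      also have "\<dots> = (\<Sum>j'\<in>J. \<Sum>i\<in>J. S i j' * W i j')"
        unfolding W_def sum_distrib_left
        apply (rule sum.cong[OF refl])
        apply (subst sum.swap)
        apply (simp add: algebra_simps)
        done
      also have "\<dots> = T" unfolding T_def by (rule sum.swap)
      finally show ?thesis .
    qed
    have F2: "(\<Sum>a<m. qf J S (d a) (d a)) = (\<Sum>a<m. \<Sum>j'\<in>J. (X a j' - (\<Sum>j\<in>J. P a j * S j j')) * d a j')"
    proof (intro sum.cong refl)
      fix a assume a: "a \<in> {..<m}"
      have "qf J S (d a) (d a) = (\<Sum>j'\<in>J. (\<Sum>j\<in>J. d a j * S j j') * d a j')"
        unfolding qf_def sum_distrib_right by (rule sum.swap)
      also have "\<dots> = (\<Sum>j'\<in>J. (X a j' - (\<Sum>j\<in>J. P a j * S j j')) * d a j')"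
      proof (intro sum.cong refl)
        fix j' assume j': "j' \<in> J"
        have "(\<Sum>j\<in>J. d a j * S j j') = (\<Sum>j\<in>J. S j j' * Q a j) - (\<Sum>j\<in>J. P a j * S j j')"
          unfolding d_def by (simp add: algebra_simps sum_subtractf)
        also have "(\<Sum>j\<in>J. S j j' * Q a j) = X a j'" using span[of a j'] a j' by simp
        finally show "(\<Sum>j\<in>J. d a j * S j j') * d a j' = (X a j' - (\<Sum>j\<in>J. P a j * S j j')) * d a j'" by simp
      qed
      finally show "qf J S (d a) (d a) = (\<Sum>j'\<in>J. (X a j' - (\<Sum>j\<in>J. P a j * S j j')) * d a j')" .
    qed
    have F3: "(\<Sum>a<m. \<Sum>j'\<in>J. (X a j' - (\<Sum>j\<in>J. P a j * S j j')) * d a j')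
        = F - (\<Sum>j'\<in>J. \<Sum>j\<in>J. S j j' * (\<Sum>a<m. P a j * d a j'))"
    proof -
      have "(\<Sum>a<m. \<Sum>j'\<in>J. (X a j' - (\<Sum>j\<in>J. P a j * S j j')) * d a j')
          = (\<Sum>a<m. \<Sum>j'\<in>J. d a j' * X a j') - (\<Sum>a<m. \<Sum>j'\<in>J. \<Sum>j\<in>J. S j j' * (P a j * d a j'))"
        by (simp add: algebra_simps sum_subtractf sum_distrib_right sum_distrib_left)
      also have "(\<Sum>a<m. \<Sum>j'\<in>J. \<Sum>j\<in>J. S j j' * (P a j * d a j')) = (\<Sum>j'\<in>J. \<Sum>j\<in>J. S j j' * (\<Sum>a<m. P a j * d a j'))"
        by (subst sum.swap) (simp add: sum_distrib_left sum.swap[of _ "{..<m}"])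
      finally show ?thesis unfolding F_def frob_inner_def by simp
    qed
    have F4: "(\<Sum>j'\<in>J. \<Sum>j\<in>J. S j j' * (\<Sum>a<m. P a j * d a j')) = T - (\<Sum>j\<in>J. S j j)"
    proof -
      have "(\<Sum>j'\<in>J. \<Sum>j\<in>J. S j j' * (\<Sum>a<m. P a j * d a j'))
          = (\<Sum>j'\<in>J. \<Sum>j\<in>J. S j j' * W j' j - (if j = j' then S j j' else 0))"
      proof (intro sum.cong refl)
        fix j' j assume j': "j' \<in> J" and j: "j \<in> J"
        have "(\<Sum>a<m. P a j * d a j') = W j' j - (\<Sum>a<m. P a j * P a j')"
          unfolding d_def W_def by (simp add: algebra_simps sum_subtractf)
        also have "\<dots> = W j' j - (if j = j' then 1 else 0)" using PP[OF j j'] by simp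
        finally have e: "(\<Sum>a<m. P a j * d a j') = W j' j - (if j = j' then 1 else 0)" .
        show "S j j' * (\<Sum>a<m. P a j * d a j') = S j j' * W j' j - (if j = j' then S j j' else 0)"
          unfolding e by (simp add: right_diff_distrib)
      qed
      also have "\<dots> = (\<Sum>j'\<in>J. \<Sum>j\<in>J. S j j' * W j' j) - (\<Sum>j\<in>J. S j j)"
        using fin by (simp add: sum_subtractf)
      also have "(\<Sum>j'\<in>J. \<Sum>j\<in>J. S j j' * W j' j) = T"
        unfolding T_def using sym by (intro sum.cong refl) auto
      finally show ?thesis .
    qed
    show ?thesis using F1 F2 F3 F4 unfolding F_def[symmetric] by simp
  qed
  ultimately show ?thesis unfolding d_def by simp
qed

lemma finite_tidx: "finite (tidx k n)"
  unfolding tidx_def by (rule finite_PiE) auto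

lemma tcontr_split:
  assumes i: "i \<in> {1..k}"
  shows "tcontr k n A u = (\<Sum>a<n i. tcontr_mode k n A u i a * u i a)"
proof -
  have img: "(\<lambda>\<iota>. \<iota> i) ` tidx k n \<subseteq> {..<n i}"
    using i unfolding tidx_def by (auto simp: PiE_def Pi_def)
  have "tcontr k n A u = (\<Sum>a<n i. \<Sum>\<iota>\<in>{\<iota>\<in>tidx k n. \<iota> i = a}. A \<iota> * (\<Prod>l\<in>{1..k}. u l (\<iota> l)))"
    unfolding tcontr_def by (rule sum.group[OF finite_tidx finite_lessThan img, symmetric])
  also have "\<dots> = (\<Sum>a<n i. tcontr_mode k n A u i a * u i a)"
  proof (intro sum.cong refl)
    fix a
    have "(\<Sum>\<iota>\<in>{\<iota>\<in>tidx k n. \<iota> i = a}. A \<iota> * (\<Prod>l\<in>{1..k}. u l (\<iota> l)))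
        = (\<Sum>\<iota>\<in>{\<iota>\<in>tidx k n. \<iota> i = a}. A \<iota> * (\<Prod>l\<in>{1..k} - {i}. u l (\<iota> l)) * u i a)"
    proof (intro sum.cong refl)
      fix \<iota> assume "\<iota> \<in> {\<iota>\<in>tidx k n. \<iota> i = a}"
      then have "\<iota> i = a" by simp
      then show "A \<iota> * (\<Prod>l\<in>{1..k}. u l (\<iota> l)) = A \<iota> * (\<Prod>l\<in>{1..k} - {i}. u l (\<iota> l)) * u i a"
        using prod.remove[of "{1..k}" i "\<lambda>l. u l (\<iota> l)"] i by (simp add: mult.commute mult.left_commute)
    qed
    then show "(\<Sum>\<iota>\<in>{\<iota>\<in>tidx k n. \<iota> i = a}. A \<iota> * (\<Prod>l\<in>{1..k}. u l (\<iota> l))) = tcontr_mode k n A u i a * u i a"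
      unfolding tcontr_mode_def by (simp add: sum_distrib_right)
  qed
  finally show ?thesis .
qed

lemma tcontr_cong:
  assumes "\<And>l. l \<in> {1..k} \<Longrightarrow> u l = v l"
  shows "tcontr k n A u = tcontr k n A v"
  unfolding tcontr_def using assms by (intro sum.cong refl arg_cong2[where f="(*)"] prod.cong) auto

lemma tcontr_mode_cong:
  assumes "\<And>l. l \<in> {1..k} \<Longrightarrow> l \<noteq> i \<Longrightarrow> u l = v l"
  shows "tcontr_mode k n A u i = tcontr_mode k n A v i"
  unfolding tcontr_mode_def using assms by (intro ext sum.cong refl arg_cong2[where f="(*)"] prod.cong) auto

lemma lam_old:
  assumes "i \<in> {1..k}"
  shows "lam k n A U p i j = (\<Sum>a<n i. Vmat k n A U p i a j * U (p - 1) i a j)"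
  unfolding lam_def Vmat_def tcontr_split[OF assms, where A=A and u="xvec U p i j"]
  by (simp add: xvec_def col_def)

lemma lam_new:
  assumes i: "i \<in> {1..k}"
  shows "lam k n A U p (Suc i) j = (\<Sum>a<n i. Vmat k n A U p i a j * U p i a j)"
proof -
  have "tcontr_mode k n A (xvec U p (Suc i) j) i = tcontr_mode k n A (xvec U p i j) i"
    by (rule tcontr_mode_cong) (auto simp: xvec_def)
  then show ?thesis
    unfolding lam_def Vmat_def tcontr_split[OF assms, where A=A and u="xvec U p (Suc i) j"]
    by (simp add: xvec_def col_def)
qed

lemma lam_first: "lam k n A U p 1 j = tcontr k n A (\<lambda>l. col U (p - 1) l j)"
  unfolding lam_def by (rule tcontr_cong) (auto simp: xvec_def)

lemma lam_last: "lam k n A U p (Suc k) j = tcontr k n A (\<lambda>l. col U p l j)"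
  unfolding lam_def by (rule tcontr_cong) (auto simp: xvec_def)

lemma step3_alg:
  fixes V uo un :: "nat \<Rightarrow> real"
  assumes ldef: "l = (\<Sum>a<m. V a * uo a)" and l0: "l \<noteq> 0"
    and un: "\<And>a. a < m \<Longrightarrow> un a = sgn l * V a / sqrt (\<Sum>b<m. (V b)\<^sup>2)"
  shows "sqrt (\<Sum>b<m. (V b)\<^sup>2) > 0" "(\<Sum>a<m. (un a)\<^sup>2) = 1"
    "(\<Sum>a<m. V a * un a) = sgn l * sqrt (\<Sum>b<m. (V b)\<^sup>2)"
proof -
  define N where "N = sqrt (\<Sum>b<m. (V b)\<^sup>2)"
  have "\<exists>a<m. V a \<noteq> 0"
  proof (rule ccontr)
    assume "\<not> ?thesis" then have "l = 0" unfolding ldef by simp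
    then show False using l0 by simp
  qed
  then obtain a0 where a0: "a0 < m" "V a0 \<noteq> 0" by blast
  have "(V a0)\<^sup>2 \<le> (\<Sum>b<m. (V b)\<^sup>2)" using a0 by (intro member_le_sum) auto
  moreover have "(V a0)\<^sup>2 > 0" using a0 by simp
  ultimately have pos: "(\<Sum>b<m. (V b)\<^sup>2) > 0" by linarith
  then show N: "sqrt (\<Sum>b<m. (V b)\<^sup>2) > 0" by simp
  have NN: "N\<^sup>2 = (\<Sum>b<m. (V b)\<^sup>2)" unfolding N_def using pos by simp
  have sg: "(sgn l)\<^sup>2 = 1" using l0 by (simp add: sgn_if)
  have "(\<Sum>a<m. (un a)\<^sup>2) = (\<Sum>a<m. (sgn l)\<^sup>2 * (V a)\<^sup>2 / N\<^sup>2)"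
    by (intro sum.cong refl) (simp add: un N_def power_divide power_mult_distrib)
  also have "\<dots> = (\<Sum>a<m. (V a)\<^sup>2) / N\<^sup>2" using sg by (simp add: sum_divide_distrib)
  also have "\<dots> = 1" using NN pos by simp
  finally show "(\<Sum>a<m. (un a)\<^sup>2) = 1" .
  have "(\<Sum>a<m. V a * un a) = (\<Sum>a<m. sgn l * (V a)\<^sup>2 / N)"
    by (intro sum.cong refl) (simp add: un N_def power2_eq_square)
  also have "\<dots> = sgn l * ((\<Sum>a<m. (V a)\<^sup>2) / N)"
    by (simp add: sum_divide_distrib sum_distrib_left)
  also have "\<dots> = sgn l * (N\<^sup>2 / N)" using NN by simp
  also have "\<dots> = sgn l * N"
  proof -
    have "N > 0" using N unfolding N_def[symmetric] .
    then show ?thesis by (simp add: power2_eq_square)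
  qed
  finally show "(\<Sum>a<m. V a * un a) = sgn l * sqrt (\<Sum>b<m. (V b)\<^sup>2)" unfolding N_def .
qed

lemma step3_bound:
  fixes V uo un :: "nat \<Rightarrow> real"
  assumes ldef: "l = (\<Sum>a<m. V a * uo a)" and kl: "\<kappa> \<le> \<bar>l\<bar>" and k0: "0 < \<kappa>"
    and un: "\<And>a. a < m \<Longrightarrow> un a = sgn l * V a / sqrt (\<Sum>b<m. (V b)\<^sup>2)"
    and uo: "(\<Sum>a<m. (uo a)\<^sup>2) = 1"
  shows "\<kappa>\<^sup>2 * (\<Sum>a<m. (un a - uo a)\<^sup>2) \<le> (\<Sum>a<m. V a * un a)\<^sup>2 - l\<^sup>2"
    "\<kappa> \<le> \<bar>\<Sum>a<m. V a * un a\<bar>"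
proof -
  have l0: "l \<noteq> 0" using kl k0 by auto
  note f = step3_alg[OF ldef l0 un]
  define N where "N = sqrt (\<Sum>b<m. (V b)\<^sup>2)"
  have Np: "N > 0" using f(1) N_def by simp
  have NN: "N\<^sup>2 = (\<Sum>b<m. (V b)\<^sup>2)" unfolding N_def by (simp add: sum_nonneg)
  have "l\<^sup>2 \<le> (\<Sum>b<m. (V b)\<^sup>2) * (\<Sum>a<m. (uo a)\<^sup>2)" unfolding ldef by (rule Cauchy_Schwarz_ineq_sum)
  then have "l\<^sup>2 \<le> N\<^sup>2" using uo NN by simp
  then have lN: "\<bar>l\<bar> \<le> N" using Np by (simp add: abs_le_square_iff[symmetric])
  have new: "(\<Sum>a<m. V a * un a) = sgn l * N" using f(3) N_def by simp
  have sgl: "sgn l * l = \<bar>l\<bar>" by (simp add: sgn_mult_abs abs_sgn mult.commute) 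
  have cross: "(\<Sum>a<m. un a * uo a) = \<bar>l\<bar> / N"
  proof -
    have "(\<Sum>a<m. un a * uo a) = (\<Sum>a<m. (sgn l / N) * (V a * uo a))"
      by (intro sum.cong refl) (simp add: un N_def)
    also have "\<dots> = sgn l * l / N" unfolding ldef sum_distrib_left[symmetric] by simp
    finally show ?thesis using sgl by simp
  qed
  have "(\<Sum>a<m. (un a - uo a)\<^sup>2) = (\<Sum>a<m. (un a)\<^sup>2) + (\<Sum>a<m. (uo a)\<^sup>2) - 2 * (\<Sum>a<m. un a * uo a)"
    by (simp add: power2_diff sum.distrib sum_subtractf sum_distrib_left mult.assoc)
  also have "\<dots> = 2 - 2 * \<bar>l\<bar> / N" using f(2) uo cross by simp
  finally have D: "(\<Sum>a<m. (un a - uo a)\<^sup>2) = 2 - 2 * \<bar>l\<bar> / N" .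
  have sq: "(\<Sum>a<m. V a * un a)\<^sup>2 = N\<^sup>2" using new l0 by (simp add: power_mult_distrib sgn_if)
  have "\<kappa>\<^sup>2 * (2 - 2 * \<bar>l\<bar> / N) \<le> N\<^sup>2 - l\<^sup>2"
  proof -
    have "\<kappa>\<^sup>2 * (2 - 2 * \<bar>l\<bar> / N) = 2 * \<kappa>\<^sup>2 * (N - \<bar>l\<bar>) / N" using Np by (simp add: field_simps)
    also have "\<dots> \<le> N * (N + \<bar>l\<bar>) * (N - \<bar>l\<bar>) / N"
    proof (intro divide_right_mono mult_right_mono)
      have "\<kappa> * \<kappa> \<le> N * \<bar>l\<bar>" using kl lN k0 by (intro mult_mono) auto
      moreover have "\<kappa> * \<kappa> \<le> N * N" using kl lN k0 by (intro mult_mono) auto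
      ultimately show "2 * \<kappa>\<^sup>2 \<le> N * (N + \<bar>l\<bar>)" by (simp add: power2_eq_square algebra_simps)
    qed (use lN Np in auto)
    also have "\<dots> = N\<^sup>2 - l\<^sup>2" using Np by (simp add: field_simps power2_eq_square)
    finally show ?thesis .
  qed
  then show "\<kappa>\<^sup>2 * (\<Sum>a<m. (un a - uo a)\<^sup>2) \<le> (\<Sum>a<m. V a * un a)\<^sup>2 - l\<^sup>2" using D sq by simp
  show "\<kappa> \<le> \<bar>\<Sum>a<m. V a * un a\<bar>" using new kl lN l0 Np by (simp add: abs_mult sgn_if)
qed

lemma orth_sq: assumes "orth_cols m J Q" shows "(\<Sum>a<m. \<Sum>j\<in>J. Q a j * P a j) = (\<Sum>j\<in>J. \<Sum>a<m. Q a j * P a j)"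
  and "(\<Sum>j\<in>J. \<Sum>a<m. Q a j * Q a j) = real (card J)"
proof -
  show "(\<Sum>a<m. \<Sum>j\<in>J. Q a j * P a j) = (\<Sum>j\<in>J. \<Sum>a<m. Q a j * P a j)" by (rule sum.swap)
  have "(\<Sum>j\<in>J. \<Sum>a<m. Q a j * Q a j) = (\<Sum>j\<in>J. 1)"
    using assms unfolding orth_cols_def by (intro sum.cong refl) auto
  then show "(\<Sum>j\<in>J. \<Sum>a<m. Q a j * Q a j) = real (card J)" by simp
qed

lemma polar_case2:
  assumes fin: "finite J" and P: "orth_cols m J P" and pol: "in_polar m J (\<lambda>a j. X a j + \<epsilon> * P a j) Q"
  shows "\<epsilon> / 2 * (\<Sum>a<m. \<Sum>j\<in>J. (Q a j - P a j)\<^sup>2) \<le> frob_inner m J (\<lambda>a j. Q a j - P a j) X"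
proof -
  have Q: "orth_cols m J Q" using pol unfolding in_polar_def by blast
  have le: "frob_inner m J P (\<lambda>a j. X a j + \<epsilon> * P a j) \<le> frob_inner m J Q (\<lambda>a j. X a j + \<epsilon> * P a j)"
    using pol P unfolding in_polar_def by blast
  define QP where "QP = (\<Sum>a<m. \<Sum>j\<in>J. Q a j * P a j)"
  have lin: "frob_inner m J R (\<lambda>a j. X a j + \<epsilon> * P a j) = frob_inner m J R X + \<epsilon> * (\<Sum>a<m. \<Sum>j\<in>J. R a j * P a j)" for R
    unfolding frob_inner_def by (simp add: algebra_simps sum.distrib sum_distrib_left)
  have PP: "(\<Sum>a<m. \<Sum>j\<in>J. P a j * P a j) = real (card J)" by (subst sum.swap) (rule orth_sq(2)[OF P])
  have QQ: "(\<Sum>a<m. \<Sum>j\<in>J. Q a j * Q a j) = real (card J)" by (subst sum.swap) (rule orth_sq(2)[OF Q])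
  have E: "(\<Sum>a<m. \<Sum>j\<in>J. (Q a j - P a j)\<^sup>2) = 2 * real (card J) - 2 * QP"
  proof -
    have "(\<Sum>a<m. \<Sum>j\<in>J. (Q a j - P a j)\<^sup>2) = (\<Sum>a<m. \<Sum>j\<in>J. Q a j * Q a j) + (\<Sum>a<m. \<Sum>j\<in>J. P a j * P a j) - 2 * QP"
    proof -
      have e: "\<And>x y::real. (x - y)\<^sup>2 = x * x + y * y - 2 * (x * y)" by (simp add: power2_eq_square algebra_simps)
      show ?thesis unfolding QP_def e by (simp add: sum.distrib sum_subtractf sum_distrib_left)
    qed
    then show ?thesis using PP QQ by simp
  qed
  have diff: "frob_inner m J (\<lambda>a j. Q a j - P a j) X = frob_inner m J Q X - frob_inner m J P X"
    unfolding frob_inner_def by (simp add: algebra_simps sum_subtractf)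
  have "frob_inner m J P X + \<epsilon> * real (card J) \<le> frob_inner m J Q X + \<epsilon> * QP"
    using le unfolding lin PP QP_def .
  then show ?thesis unfolding diff E by (simp add: algebra_simps)
qed

context
  fixes k s r :: nat and n :: "nat \<Rightarrow> nat" and A :: tensor
    and \<epsilon> \<kappa> :: real and U :: "nat \<Rightarrow> nat \<Rightarrow> mat" and Js :: "nat \<Rightarrow> nat set"
  assumes it: "iAPD_ALS k s n r A \<epsilon> \<kappa> U Js"
begin

lemma it_step:
  assumes "1 \<le> q"
  shows "\<forall>i\<in>{1..s}.
          (in_polar (n i) (Js (q - 1)) (VLam k n A U q i) (U q i) \<and>
           \<not> min_eig_less (Js (q - 1)) (mtmul (n i) (U q i) (VLam k n A U q i)) \<epsilon>)
        \<or> ((\<exists>Q. in_polar (n i) (Js (q - 1)) (VLam k n A U q i) Q \<and>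
                 min_eig_less (Js (q - 1)) (mtmul (n i) Q (VLam k n A U q i)) \<epsilon>) \<and>
           in_polar (n i) (Js (q - 1))
             (\<lambda>a j. VLam k n A U q i a j + \<epsilon> * U (q - 1) i a j) (U q i))"
    "Js q = {j \<in> Js (q - 1). \<bar>mtmul (n s) (U q s) (Vmat k n A U q s) j j\<bar> \<ge> \<kappa>}"
    "\<forall>i\<in>{s+1..k}. \<forall>j\<in>Js q. \<forall>a<n i.
          U q i a j = sgn (lam k n A U q i j) * Vmat k n A U q i a j
                      / sqrt (\<Sum>b<n i. (Vmat k n A U q i b j)\<^sup>2)"
  using it assms unfolding iAPD_ALS_def by blast+

lemma it_init: "Js 0 = {..<r}" "\<forall>i\<in>{1..s}. orth_cols (n i) {..<r} (U 0 i)"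
     "\<forall>i\<in>{s+1..k}. unit_cols (n i) {..<r} (U 0 i)" "0 < \<kappa>"
  using it unfolding iAPD_ALS_def by blast+

lemma Js_dec: "1 \<le> q \<Longrightarrow> Js q \<subseteq> Js (q - 1)"
  using it_step(2) by auto

lemma Js_sub: "Js q \<subseteq> {..<r}"
proof (induction q)
  case 0 then show ?case using it_init by simp
next
  case (Suc q) then show ?case using Js_dec[of "Suc q"] by auto
qed

lemma Js_fin: "finite (Js q)"
  using Js_sub finite_subset by blast

lemma orth_at:
  assumes i: "i \<in> {1..s}"
  shows "orth_cols (n i) (Js q) (U q i)"
proof (cases "q = 0")
  case True then show ?thesis using it_init i by simp
next
  case False
  then have q: "1 \<le> q" by simp
  have "in_polar (n i) (Js (q - 1)) (VLam k n A U q i) (U q i) \<or>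
        in_polar (n i) (Js (q - 1)) (\<lambda>a j. VLam k n A U q i a j + \<epsilon> * U (q - 1) i a j) (U q i)"
    using it_step(1)[OF q] i by blast
  then have "orth_cols (n i) (Js (q - 1)) (U q i)" unfolding in_polar_def by blast
  then show ?thesis using Js_dec[OF q] unfolding orth_cols_def by blast
qed

lemma lam_base:
  assumes s1: "1 \<le> s" and sk: "s \<le> k" and q: "1 \<le> q" and j: "j \<in> Js q"
  shows "\<kappa> \<le> \<bar>lam k n A U q (Suc s) j\<bar>"
proof -
  have "lam k n A U q (Suc s) j = (\<Sum>a<n s. Vmat k n A U q s a j * U q s a j)"
    using s1 sk by (intro lam_new) auto
  also have "\<dots> = mtmul (n s) (U q s) (Vmat k n A U q s) j j"
    unfolding mtmul_def by (simp add: mult.commute)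
  finally show ?thesis using it_step(2)[OF q] j by auto
qed

lemma lam_nonzero:
  assumes s1: "1 \<le> s" and sk: "s \<le> k" and q: "1 \<le> q" and j: "j \<in> Js q"
  shows "s + 1 + d \<le> k \<Longrightarrow> lam k n A U q (s + 1 + d) j \<noteq> 0"
proof (induction d)
  case 0
  then show ?case using lam_base[OF s1 sk q j] it_init(4) by auto
next
  case (Suc d)
  define i where "i = s + 1 + d"
  have i: "i \<in> {1..k}" "i \<in> {s+1..k}" using Suc.prems i_def by auto
  have l0: "lam k n A U q i j \<noteq> 0" using Suc i_def by simp
  note f = step3_alg[OF lam_old[OF i(1), where n=n and A=A and U=U and p=q and j=j] l0, of "\<lambda>a. U q i a j"]
  have "lam k n A U q (Suc i) j = (\<Sum>a<n i. Vmat k n A U q i a j * U q i a j)"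
    by (rule lam_new[OF i(1)])
  also have "\<dots> = sgn (lam k n A U q i j) * sqrt (\<Sum>b<n i. (Vmat k n A U q i b j)\<^sup>2)"
    using f(3) it_step(3)[OF q] i(2) j by blast
  finally show ?case using f(1) l0 it_step(3)[OF q] i(2) j i_def
    by (simp add: sgn_if)
qed

lemma unit_at:
  assumes s1: "1 \<le> s" and sk: "s \<le> k" and i: "i \<in> {s+1..k}" and j: "j \<in> Js q"
  shows "(\<Sum>a<n i. (U q i a j)\<^sup>2) = 1"
proof (cases "q = 0")
  case True
  then show ?thesis using it_init(1,3) i j unfolding unit_cols_def by auto
next
  case False
  then have q: "1 \<le> q" by simp
  have i1: "i \<in> {1..k}" using i s1 by auto
  have "lam k n A U q (s + 1 + (i - s - 1)) j \<noteq> 0"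
    using lam_nonzero[OF s1 sk q j, of "i - s - 1"] i by auto
  then have l0: "lam k n A U q i j \<noteq> 0" using i by simp
  show ?thesis
    by (rule step3_alg(2)[OF lam_old[OF i1, where n=n and A=A and U=U and p=q and j=j] l0]) (use it_step(3)[OF q] i j in blast)
qed

lemma kappa_at:
  assumes s1: "1 \<le> s" and sk: "s \<le> k" and p: "1 \<le> p" and j: "j \<in> Js p"
  shows "s + 1 + d \<le> k \<Longrightarrow> \<kappa> \<le> \<bar>lam k n A U p (s + 1 + d) j\<bar>"
proof (induction d)
  case 0
  then show ?case using lam_base[OF s1 sk p j] by auto
next
  case (Suc d)
  define i where "i = s + 1 + d"
  have i: "i \<in> {1..k}" "i \<in> {s+1..k}" using Suc.prems i_def by auto
  have kl: "\<kappa> \<le> \<bar>lam k n A U p i j\<bar>" using Suc i_def by simp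
  have jp: "j \<in> Js (p - 1)" using Js_dec[OF p] j by auto
  have uo: "(\<Sum>a<n i. (U (p - 1) i a j)\<^sup>2) = 1" by (rule unit_at[OF s1 sk i(2) jp])
  have un: "\<And>a. a < n i \<Longrightarrow> U p i a j = sgn (lam k n A U p i j) * Vmat k n A U p i a j
                      / sqrt (\<Sum>b<n i. (Vmat k n A U p i b j)\<^sup>2)"
    using it_step(3)[OF p] i(2) j by blast
  note f = step3_bound[OF lam_old[OF i(1), where n=n and A=A and U=U and p=p and j=j] kl it_init(4) un uo]
  have "lam k n A U p (Suc i) j = (\<Sum>a<n i. Vmat k n A U p i a j * U p i a j)"
    by (rule lam_new[OF i(1)])
  then show ?case using f(2) i_def by simp
qed

end


theorem proposition5p4:
  fixes k s r :: nat and n :: "nat \<Rightarrow> nat" and A :: tensor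
    and \<epsilon> \<kappa> :: real and U :: "nat \<Rightarrow> nat \<Rightarrow> mat" and Js :: "nat \<Rightarrow> nat set"
  assumes "k \<ge> 3" and "1 \<le> s" and "s \<le> k"
    and "\<forall>i\<in>{1..s}. r \<le> n i"
    and "\<exists>\<iota>\<in>tidx k n. A \<iota> \<noteq> 0"
    and "\<epsilon> > 0"
    and "iAPD_ALS k s n r A \<epsilon> \<kappa> U Js"
    and "p \<ge> 1"
    and "Js p = Js (p - 1)"
  shows "fobj k n A U (Js p) p - fobj k n A U (Js (p - 1)) (p - 1)
           \<ge> min \<epsilon> (2 * \<kappa>\<^sup>2) / 2 * frob_dist2 k n U (Js p) p (p - 1)"
proof -
  note it = assms(7)
  note s1 = assms(2) and sk = assms(3) and eps = assms(6) and p = assms(8)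
  define J where "J = Js p"
  have fin: "finite J" unfolding J_def by (rule Js_fin[OF it])
  have JJ: "Js (p - 1) = J" using assms(9) J_def by simp
  have k0: "0 < \<kappa>" using it_init(4)[OF it] .
  define c where "c = min \<epsilon> (2 * \<kappa>\<^sup>2) / 2"
  have c: "c \<le> \<epsilon>" "c \<le> \<kappa>\<^sup>2" "0 \<le> c" using eps k0 unfolding c_def by auto
  define L where "L = (\<lambda>i j. lam k n A U p i j)"
  define D where "D = (\<lambda>i. \<Sum>j\<in>J. (L (Suc i) j)\<^sup>2 - (L i j)\<^sup>2)"
  define E where "E = (\<lambda>i. \<Sum>a<n i. \<Sum>j\<in>J. (U p i a j - U (p - 1) i a j)\<^sup>2)"
  have E0: "0 \<le> E i" for i unfolding E_def by (intro sum_nonneg) auto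
  have lhs: "fobj k n A U (Js p) p - fobj k n A U (Js (p - 1)) (p - 1) = (\<Sum>i\<in>{1..k}. D i)"
  proof -
    have "(\<Sum>i\<in>{1..k}. D i) = (\<Sum>j\<in>J. \<Sum>i = 1..k. (L (Suc i) j)\<^sup>2 - (L i j)\<^sup>2)"
      unfolding D_def by (rule sum.swap)
    also have "\<dots> = (\<Sum>j\<in>J. (L (Suc k) j)\<^sup>2 - (L 1 j)\<^sup>2)"
      by (intro sum.cong refl sum_Suc_diff) simp
    also have "\<dots> = fobj k n A U (Js p) p - fobj k n A U (Js (p - 1)) (p - 1)"
      unfolding fobj_def JJ J_def[symmetric] L_def lam_last lam_first by (simp add: sum_subtractf)
    finally show ?thesis by simp
  qed
  have rhs: "frob_dist2 k n U (Js p) p (p - 1) = (\<Sum>i\<in>{1..k}. E i)"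
    unfolding frob_dist2_def E_def J_def ..
  have each: "c * E i \<le> D i" if i: "i \<in> {1..k}" for i
  proof (cases "i \<le> s")
    case True
    then have iS: "i \<in> {1..s}" using i by auto
    define X where "X = VLam k n A U p i"
    have Dlow: "2 * frob_inner (n i) J (\<lambda>a j. U p i a j - U (p - 1) i a j) X \<le> D i"
    proof -
      have "frob_inner (n i) J (\<lambda>a j. U p i a j - U (p - 1) i a j) X
          = (\<Sum>j\<in>J. \<Sum>a<n i. (U p i a j - U (p - 1) i a j) * X a j)"
        unfolding frob_inner_def by (rule sum.swap)
      also have "\<dots> = (\<Sum>j\<in>J. L i j * (L (Suc i) j - L i j))"
      proof (intro sum.cong refl)
        fix j
        have "L (Suc i) j - L i j = (\<Sum>a<n i. Vmat k n A U p i a j * (U p i a j - U (p - 1) i a j))"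
          unfolding L_def lam_new[OF i] lam_old[OF i] by (simp add: sum_subtractf algebra_simps)
        then show "(\<Sum>a<n i. (U p i a j - U (p - 1) i a j) * X a j) = L i j * (L (Suc i) j - L i j)"
          unfolding X_def VLam_def L_def by (simp add: sum_distrib_left algebra_simps)
      qed
      finally have "2 * frob_inner (n i) J (\<lambda>a j. U p i a j - U (p - 1) i a j) X
          = (\<Sum>j\<in>J. 2 * (L i j * (L (Suc i) j - L i j)))" by (simp add: sum_distrib_left)
      also have "\<dots> \<le> D i" unfolding D_def
      proof (intro sum_mono)
        fix j
        have "0 \<le> (L (Suc i) j - L i j)\<^sup>2" by simp
        then show "2 * (L i j * (L (Suc i) j - L i j)) \<le> (L (Suc i) j)\<^sup>2 - (L i j)\<^sup>2"
          by (simp add: power2_eq_square algebra_simps)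
      qed
      finally show ?thesis .
    qed
    have orthP: "orth_cols (n i) J (U (p - 1) i)" using orth_at[OF it iS, of "p - 1"] JJ by simp
    have pol: "\<epsilon> / 2 * E i \<le> frob_inner (n i) J (\<lambda>a j. U p i a j - U (p - 1) i a j) X"
    proof -
      have "(in_polar (n i) J X (U p i) \<and> \<not> min_eig_less J (mtmul (n i) (U p i) X) \<epsilon>)
          \<or> in_polar (n i) J (\<lambda>a j. X a j + \<epsilon> * U (p - 1) i a j) (U p i)"
        using it_step(1)[OF it p] iS unfolding JJ X_def by blast
      then show ?thesis
      proof
        assume h: "in_polar (n i) J X (U p i) \<and> \<not> min_eig_less J (mtmul (n i) (U p i) X) \<epsilon>"
        show ?thesis unfolding E_def using polar_case1[OF fin conjunct1[OF h] conjunct2[OF h] orthP] .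
      next
        assume h: "in_polar (n i) J (\<lambda>a j. X a j + \<epsilon> * U (p - 1) i a j) (U p i)"
        show ?thesis unfolding E_def using polar_case2[OF fin orthP h] .
      qed
    qed
    have "c * E i \<le> \<epsilon> * E i" using c E0 by (intro mult_right_mono) auto
    also have "\<dots> \<le> D i" using Dlow pol by simp
    finally show ?thesis .
  next
    case False
    then have iS: "i \<in> {s+1..k}" using i by auto
    have per: "\<kappa>\<^sup>2 * (\<Sum>a<n i. (U p i a j - U (p - 1) i a j)\<^sup>2) \<le> (L (Suc i) j)\<^sup>2 - (L i j)\<^sup>2"
      if j: "j \<in> J" for j
    proof -
      have jp: "j \<in> Js p" using j J_def by simp
      have jp1: "j \<in> Js (p - 1)" using j JJ by simp
      have kl: "\<kappa> \<le> \<bar>lam k n A U p i j\<bar>"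
        using kappa_at[OF it s1 sk p jp, of "i - s - 1"] iS by auto
      have uo: "(\<Sum>a<n i. (U (p - 1) i a j)\<^sup>2) = 1" by (rule unit_at[OF it s1 sk iS jp1])
      have un: "\<And>a. a < n i \<Longrightarrow> U p i a j = sgn (lam k n A U p i j) * Vmat k n A U p i a j
                      / sqrt (\<Sum>b<n i. (Vmat k n A U p i b j)\<^sup>2)"
        using it_step(3)[OF it p] iS jp by blast
      note f = step3_bound[OF lam_old[OF i, where n=n and A=A and U=U and p=p and j=j] kl k0 un uo]
      show ?thesis using f(1) unfolding L_def lam_new[OF i] .
    qed
    have "c * E i \<le> \<kappa>\<^sup>2 * E i" using c E0 by (intro mult_right_mono) auto
    also have "\<kappa>\<^sup>2 * E i = (\<Sum>j\<in>J. \<kappa>\<^sup>2 * (\<Sum>a<n i. (U p i a j - U (p - 1) i a j)\<^sup>2))"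
      unfolding E_def sum_distrib_left[symmetric] by (subst sum.swap) simp
    also have "\<dots> \<le> D i" unfolding D_def by (intro sum_mono per)
    finally show ?thesis .
  qed
  have "c * (\<Sum>i\<in>{1..k}. E i) \<le> (\<Sum>i\<in>{1..k}. D i)"
    unfolding sum_distrib_left by (intro sum_mono each) simp
  then show ?thesis unfolding lhs rhs c_def by simp
qed

end
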